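(* Let $r_1,\dots,r_n$ be pairwise distinct integers, $v_1,\dots,v_n\in\mathbb{N}\cup\{\infty\}$, and $d=\gcd(r_1,\dots,r_n)$. Let $f\in F\langle X|\mathbb{Z}\rangle$ be a multilinear polynomial. Then $f\in T_{\mathbb{Z}}(E_{(r_1/d,\dots,r_n/d)}^{(v_1,\dots,v_n)})$ if and only if $\Phi_d(f)\in T_{d\mathbb{Z}}(E_{(r_1,\dots,r_n)}^{(v_1,\dots,v_n)})$, where $E_{(r_1,\dots,r_n)}^{(v_1,\dots,v_n)}$ is regarded as a $d\mathbb{Z}$-graded algebra.
   Context: $F$ is a field of characteristic zero; $E$ is the Grassmann algebra of an infinite-dimensional $F$-vector space with basis $e_1,e_2,\dots$. For pairwise distinct integers $s_j$ and $v_j\in\mathbb{N}\cup\{\infty\}$, $E_{(s_1,\dots,s_n)}^{(v_1,\dots,v_n)}$ is the $\mathbb{Z}$-grading obtained by splitting $\{e_i\}$ into $n$ disjoint sets of cardinalities $v_1,\dots,v_n$, giving elements of the $j$-th set degree $s_j$ and monomials the sum of degrees; when all $s_j\in d\mathbb{Z}$ its components are indexed by $d\mathbb{Z}$. For a group $G$, $F\langle X|G\rangle$ is the free associative algebra on variables $x_i^g$ of degree $g$, and $T_G(A)$ is the set of graded identities of a $G$-graded algebra $A$. $\Phi_d:F\langle X|\mathbb{Z}\rangle\to F\langle X|d\mathbb{Z}\rangle$ is the algebra isomorphism $x_i^n\mapsto x_i^{dn}$. *)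

theory Defs
  imports Main "HOL-Library.Extended_Nat"
begin

text \<open>An element of E is a function from finite sets of generator indices (the
monomial e_S = e_{s1} ... e_{sk}, s1 < ... < sk) to coefficients, with finite support
consisting of finite sets.\<close>

definition grass_elem :: "(nat set \<Rightarrow> 'a::field) \<Rightarrow> bool" where
  "grass_elem x \<longleftrightarrow> finite {S. x S \<noteq> 0} \<and> (\<forall>S. x S \<noteq> 0 \<longrightarrow> finite S)"

text \<open>Sign of e_S e_T = sgn S T e_{S \<union> T} for disjoint S, T.\<close>
definition grass_sign :: "nat set \<Rightarrow> nat set \<Rightarrow> 'a::field" where
  "grass_sign S T = (-1) ^ card {(i, j). i \<in> S \<and> j \<in> T \<and> j < i}"

definition grass_mult :: "(nat set \<Rightarrow> 'a::field) \<Rightarrow> (nat set \<Rightarrow> 'a) \<Rightarrow> (nat set \<Rightarrow> 'a)" where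
  "grass_mult x y = (\<lambda>U. if finite U
      then (\<Sum>S\<in>Pow U. grass_sign S (U - S) * x S * y (U - S)) else 0)"

definition grass_one :: "nat set \<Rightarrow> 'a::field" where
  "grass_one = (\<lambda>S. if S = {} then 1 else 0)"

definition grass_prod :: "(nat set \<Rightarrow> 'a::field) list \<Rightarrow> (nat set \<Rightarrow> 'a)" where
  "grass_prod xs = foldr grass_mult xs grass_one"

text \<open>A degree assignment deg on the generators makes E a Z-graded algebra; the
component of degree g consists of the linear combinations of monomials e_S with
sum of degrees of the generators in S equal to g.\<close>

definition grass_comp :: "(nat \<Rightarrow> int) \<Rightarrow> int \<Rightarrow> (nat set \<Rightarrow> 'a::field) set" where
  "grass_comp deg g = {x. grass_elem x \<and> (\<forall>S. x S \<noteq> 0 \<longrightarrow> (\<Sum>i\<in>S. deg i) = g)}"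

definition ecard :: "'b set \<Rightarrow> enat" where
  "ecard A = (if finite A then enat (card A) else \<infinity>)"

text \<open>deg realises the grading E_{(s_1,...,s_n)}^{(v_1,...,v_n)} (indices 0..n-1):
the generators are split into the n disjoint sets {i. deg i = s j}, of cardinality v j,
elements of the j-th set having degree s j.\<close>
definition is_split_grading :: "nat \<Rightarrow> (nat \<Rightarrow> int) \<Rightarrow> (nat \<Rightarrow> enat) \<Rightarrow> (nat \<Rightarrow> int) \<Rightarrow> bool" where
  "is_split_grading n s v deg \<longleftrightarrow>
     (\<forall>i. \<exists>j<n. deg i = s j) \<and> (\<forall>j<n. ecard {i. deg i = s j} = v j)"

text \<open>Variables x_i^g are pairs (i, g); a polynomial is a finitely supported function
from words (lists of variables) to coefficients.\<close>

type_synonym 'a gpoly = "(nat \<times> int) list \<Rightarrow> 'a"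

definition is_gpoly :: "'a::field gpoly \<Rightarrow> bool" where
  "is_gpoly f \<longleftrightarrow> finite {w. f w \<noteq> 0}"

definition multilinear :: "'a::field gpoly \<Rightarrow> bool" where
  "multilinear f \<longleftrightarrow> (\<exists>V. finite V \<and> (\<forall>w. f w \<noteq> 0 \<longrightarrow> distinct w \<and> set w = V))"

definition gpoly_eval :: "'a::field gpoly \<Rightarrow> (nat \<times> int \<Rightarrow> (nat set \<Rightarrow> 'a)) \<Rightarrow> (nat set \<Rightarrow> 'a)" where
  "gpoly_eval f \<phi> = (\<lambda>U. \<Sum>w\<in>{w. f w \<noteq> 0}. f w * grass_prod (map \<phi> w) U)"

definition graded_identity :: "(nat \<Rightarrow> int) \<Rightarrow> 'a::field gpoly \<Rightarrow> bool" where
  "graded_identity deg f \<longleftrightarrow>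
     (\<forall>\<phi>. (\<forall>i g. \<phi> (i, g) \<in> grass_comp deg g) \<longrightarrow> gpoly_eval f \<phi> = (\<lambda>_. 0))"

text \<open>Phi_d : F<X|Z> \<rightarrow> F<X|dZ>, x_i^m \<mapsto> x_i^{dm} (for d \<noteq> 0).\<close>
definition Phi :: "int \<Rightarrow> 'a::field gpoly \<Rightarrow> 'a gpoly" where
  "Phi d f = (\<lambda>w. if (\<forall>x\<in>set w. d dvd snd x)
                    then f (map (\<lambda>(i, g). (i, g div d)) w) else 0)"

end

theory Submission imports Defs "HOL-Library.Infinite_Set"
begin

definition cnt :: "(nat \<Rightarrow> nat) \<Rightarrow> nat set \<Rightarrow> nat" where
  "cnt \<sigma> W = card {(i, j). i \<in> W \<and> j \<in> W \<and> i < j \<and> \<sigma> j < \<sigma> i}"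

definition ind :: "bool \<Rightarrow> nat" where "ind b = (if b then 1 else 0)"

lemma card_pairs_sum:
  assumes "finite S" "finite T"
  shows "card {(i, j). i \<in> S \<and> j \<in> T \<and> P i j} = (\<Sum>i\<in>S. \<Sum>j\<in>T. ind (P i j))"
proof -
  have "{(i, j). i \<in> S \<and> j \<in> T \<and> P i j} = (S \<times> T) \<inter> {p. case p of (i,j) \<Rightarrow> P i j}" by auto
  hence "card {(i, j). i \<in> S \<and> j \<in> T \<and> P i j} = (\<Sum>p\<in>(S \<times> T) \<inter> {p. case p of (i,j) \<Rightarrow> P i j}. 1)"
    by (simp only: card_eq_sum)
  also have "\<dots> = (\<Sum>p\<in>S \<times> T. ind (case p of (i,j) \<Rightarrow> P i j))"
    using assms by (subst sum.inter_restrict) (auto simp: ind_def intro!: sum.cong)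
  also have "\<dots> = (\<Sum>i\<in>S. \<Sum>j\<in>T. ind (P i j))" by (simp add: sum.cartesian_product split_def)
  finally show ?thesis .
qed

lemma cnt_sum: "finite W \<Longrightarrow> cnt \<sigma> W = (\<Sum>i\<in>W. \<Sum>j\<in>W. ind (i < j \<and> \<sigma> j < \<sigma> i))"
  unfolding cnt_def by (rule card_pairs_sum)

lemma sign_sum: "finite S \<Longrightarrow> finite T \<Longrightarrow>
   grass_sign S T = (-1) ^ (\<Sum>i\<in>S. \<Sum>j\<in>T. ind (j < i))"
  unfolding grass_sign_def by (simp add: card_pairs_sum)

lemma sign_img:
  assumes "inj \<sigma>" "finite S" "finite T"
  shows "grass_sign (\<sigma> ` S) (\<sigma> ` T) = (-1) ^ (\<Sum>i\<in>S. \<Sum>j\<in>T. ind (\<sigma> j < \<sigma> i))"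
proof -
  have "(\<Sum>a\<in>\<sigma> ` S. \<Sum>b\<in>\<sigma> ` T. ind (b < a)) = (\<Sum>i\<in>S. \<Sum>j\<in>T. ind (\<sigma> j < \<sigma> i))"
    using assms by (simp add: sum.reindex inj_on_subset[OF assms(1)])
  thus ?thesis using assms by (simp add: sign_sum)
qed

lemma pointwise:
  fixes \<sigma> :: "nat \<Rightarrow> nat" and i j :: nat
  assumes "i \<noteq> j" "inj \<sigma>"
  shows "ind (i < j \<and> \<sigma> j < \<sigma> i) + ind (j < i \<and> \<sigma> i < \<sigma> j) + ind (j < i)
       = ind (\<sigma> j < \<sigma> i) + 2 * ind (j < i \<and> \<sigma> i < \<sigma> j)"
proof -
  have "\<sigma> i \<noteq> \<sigma> j" using assms by (meson injD)
  thus ?thesis using assms(1) 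
  proof -
    have "i < j \<or> j < i" using assms(1) by arith
    moreover have "\<sigma> i < \<sigma> j \<or> \<sigma> j < \<sigma> i" using \<open>\<sigma> i \<noteq> \<sigma> j\<close> by arith
    ultimately show ?thesis by (elim disjE) (simp_all add: ind_def)
  qed
qed

definition eps :: "(nat \<Rightarrow> nat) \<Rightarrow> nat set \<Rightarrow> 'a::field" where
  "eps \<sigma> W = (-1) ^ cnt \<sigma> W"

lemma key:
  assumes "inj \<sigma>" "finite S" "finite T" "S \<inter> T = {}"
  shows "eps \<sigma> (S \<union> T) * grass_sign S T
       = (grass_sign (\<sigma> ` S) (\<sigma> ` T) * eps \<sigma> S * eps \<sigma> T :: 'a::field)"
proof -
  define I where "I = (\<lambda>i j. ind (i < j \<and> \<sigma> j < \<sigma> i))"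
  have c: "cnt \<sigma> (S \<union> T) = cnt \<sigma> S + cnt \<sigma> T + (\<Sum>i\<in>S. \<Sum>j\<in>T. I i j) + (\<Sum>i\<in>S. \<Sum>j\<in>T. I j i)"
  proof -
    have "cnt \<sigma> (S \<union> T) = (\<Sum>i\<in>S \<union> T. \<Sum>j\<in>S \<union> T. I i j)"
      using assms by (simp add: cnt_sum I_def)
    also have "\<dots> = (\<Sum>i\<in>S. \<Sum>j\<in>S. I i j) + (\<Sum>i\<in>S. \<Sum>j\<in>T. I i j)
        + ((\<Sum>i\<in>T. \<Sum>j\<in>S. I i j) + (\<Sum>i\<in>T. \<Sum>j\<in>T. I i j))"
      using assms by (simp add: sum.union_disjoint sum.distrib)
    also have "(\<Sum>i\<in>T. \<Sum>j\<in>S. I i j) = (\<Sum>i\<in>S. \<Sum>j\<in>T. I j i)" by (rule sum.swap)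
    finally show ?thesis using assms by (simp add: cnt_sum I_def)
  qed
  define Y where "Y = (\<Sum>i\<in>S. \<Sum>j\<in>T. ind (j < i \<and> \<sigma> i < \<sigma> j))"
  have e: "(\<Sum>i\<in>S. \<Sum>j\<in>T. I i j) + (\<Sum>i\<in>S. \<Sum>j\<in>T. I j i) + (\<Sum>i\<in>S. \<Sum>j\<in>T. ind (j < i))
      = (\<Sum>i\<in>S. \<Sum>j\<in>T. ind (\<sigma> j < \<sigma> i)) + 2 * Y"
  proof -
    have "(\<Sum>i\<in>S. \<Sum>j\<in>T. I i j) + (\<Sum>i\<in>S. \<Sum>j\<in>T. I j i) + (\<Sum>i\<in>S. \<Sum>j\<in>T. ind (j < i))
       = (\<Sum>i\<in>S. \<Sum>j\<in>T. I i j + I j i + ind (j < i))" by (simp add: sum.distrib)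
    also have "\<dots> = (\<Sum>i\<in>S. \<Sum>j\<in>T. ind (\<sigma> j < \<sigma> i) + 2 * ind (j < i \<and> \<sigma> i < \<sigma> j))"
    proof (intro sum.cong refl)
      fix i j assume "i \<in> S" "j \<in> T"
      hence "i \<noteq> j" using assms(4) by auto
      thus "I i j + I j i + ind (j < i) = ind (\<sigma> j < \<sigma> i) + 2 * ind (j < i \<and> \<sigma> i < \<sigma> j)"
        using pointwise[OF _ assms(1)] unfolding I_def by simp
    qed
    also have "\<dots> = (\<Sum>i\<in>S. \<Sum>j\<in>T. ind (\<sigma> j < \<sigma> i)) + 2 * Y"
      by (simp add: sum.distrib sum_distrib_left Y_def)
    finally show ?thesis .
  qed
  have "eps \<sigma> (S \<union> T) * grass_sign S T = ((-1::'a) ^ (cnt \<sigma> (S \<union> T) + (\<Sum>i\<in>S. \<Sum>j\<in>T. ind (j < i))))"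
    using assms by (simp add: eps_def sign_sum power_add)
  also have "cnt \<sigma> (S \<union> T) + (\<Sum>i\<in>S. \<Sum>j\<in>T. ind (j < i))
     = cnt \<sigma> S + cnt \<sigma> T + (\<Sum>i\<in>S. \<Sum>j\<in>T. ind (\<sigma> j < \<sigma> i)) + 2 * Y"
    using c e by simp
  also have "(-1::'a) ^ \<dots> = grass_sign (\<sigma> ` S) (\<sigma> ` T) * eps \<sigma> S * eps \<sigma> T"
    using assms by (simp add: eps_def sign_img power_add power_mult)
  finally show ?thesis .
qed

definition Psi :: "(nat \<Rightarrow> nat) \<Rightarrow> (nat set \<Rightarrow> 'a::field) \<Rightarrow> (nat set \<Rightarrow> 'a)" where
  "Psi \<sigma> x = (\<lambda>U. eps \<sigma> (\<sigma> -` U) * x (\<sigma> -` U))"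

lemma Psi_mult:
  assumes "bij \<sigma>"
  shows "Psi \<sigma> (grass_mult x y) = grass_mult (Psi \<sigma> x) (Psi \<sigma> y)"
proof (rule ext)
  fix U
  define V where "V = \<sigma> -` U"
  have inj: "inj \<sigma>" using assms bij_is_inj by auto
  have UV: "\<sigma> ` V = U" using assms unfolding V_def by (simp add: bij_is_surj surj_image_vimage_eq)
  have fin: "finite U \<longleftrightarrow> finite V"
    using UV inj by (metis finite_imageD finite_imageI inj_on_subset subset_UNIV)
  show "Psi \<sigma> (grass_mult x y) U = grass_mult (Psi \<sigma> x) (Psi \<sigma> y) U"
  proof (cases "finite U")
    case False
    thus ?thesis using fin by (simp add: Psi_def grass_mult_def V_def[symmetric])
  next
    case True
    hence fV: "finite V" using fin by simp
    have "grass_mult (Psi \<sigma> x) (Psi \<sigma> y) U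
       = (\<Sum>S'\<in>Pow U. grass_sign S' (U - S') * Psi \<sigma> x S' * Psi \<sigma> y (U - S'))"
      using True by (simp add: grass_mult_def)
    also have "\<dots> = (\<Sum>S\<in>Pow V. grass_sign (\<sigma> ` S) (U - \<sigma> ` S) * Psi \<sigma> x (\<sigma> ` S) * Psi \<sigma> y (U - \<sigma> ` S))"
    proof -
      have "Pow U = image \<sigma> ` Pow V" using UV image_Pow_surj by metis
      moreover have "inj_on (image \<sigma>) (Pow V)" using inj inj_on_image_Pow inj_on_subset by blast
      ultimately show ?thesis by (simp add: sum.reindex)
    qed
    also have "\<dots> = (\<Sum>S\<in>Pow V. eps \<sigma> V * (grass_sign S (V - S) * x S * y (V - S)))"
    proof (intro sum.cong refl)
      fix S assume S: "S \<in> Pow V"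
      have d: "U - \<sigma> ` S = \<sigma> ` (V - S)" using UV inj by (metis image_set_diff)
      have a: "\<sigma> -` (\<sigma> ` S) = S" using inj by (simp add: inj_vimage_image_eq)
      have b: "\<sigma> -` (\<sigma> ` (V - S)) = V - S" using inj by (simp add: inj_vimage_image_eq)
      have fS: "finite S" "finite (V - S)" using S fV finite_subset by auto
      have VS: "S \<union> (V - S) = V" using S by auto
      have k: "eps \<sigma> V * grass_sign S (V - S)
          = (grass_sign (\<sigma> ` S) (\<sigma> ` (V - S)) * eps \<sigma> S * eps \<sigma> (V - S) :: 'a)"
        using key[OF inj fS] VS by auto
      show "grass_sign (\<sigma> ` S) (U - \<sigma> ` S) * Psi \<sigma> x (\<sigma> ` S) * Psi \<sigma> y (U - \<sigma> ` S)
          = eps \<sigma> V * (grass_sign S (V - S) * x S * y (V - S))"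
        unfolding d Psi_def a b
        using k by (simp add: algebra_simps)
    qed
    also have "\<dots> = Psi \<sigma> (grass_mult x y) U"
      using fV by (simp add: Psi_def grass_mult_def V_def[symmetric] sum_distrib_left)
    finally show ?thesis by simp
  qed
qed

lemma eps_empty: "eps \<sigma> {} = 1"
  by (simp add: eps_def cnt_def)

lemma Psi_one:
  assumes "bij \<sigma>" shows "Psi \<sigma> grass_one = grass_one"
proof (rule ext)
  fix U
  have "\<sigma> -` U = {} \<longleftrightarrow> U = {}" using assms
    by (metis bij_is_surj image_empty surj_image_vimage_eq vimage_empty)
  thus "Psi \<sigma> grass_one U = grass_one U"
    by (auto simp: Psi_def grass_one_def eps_empty)
qed

lemma Psi_prod:
  assumes "bij \<sigma>" shows "Psi \<sigma> (grass_prod xs) = grass_prod (map (Psi \<sigma>) xs)"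
  by (induction xs) (simp_all add: grass_prod_def Psi_one[OF assms] Psi_mult[OF assms])

lemma Psi_eval:
  assumes "bij \<sigma>" shows "Psi \<sigma> (gpoly_eval f \<phi>) = gpoly_eval f (Psi \<sigma> \<circ> \<phi>)"
proof (rule ext)
  fix U
  have "Psi \<sigma> (gpoly_eval f \<phi>) U = (\<Sum>w\<in>{w. f w \<noteq> 0}. f w * Psi \<sigma> (grass_prod (map \<phi> w)) U)"
    by (simp add: Psi_def gpoly_eval_def sum_distrib_left algebra_simps)
  also have "\<dots> = gpoly_eval f (Psi \<sigma> \<circ> \<phi>) U"
    by (simp add: gpoly_eval_def Psi_prod[OF assms] map_map)
  finally show "Psi \<sigma> (gpoly_eval f \<phi>) U = gpoly_eval f (Psi \<sigma> \<circ> \<phi>) U" .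
qed

lemma eps_sq: "eps \<sigma> S * eps \<sigma> S = (1::'a::field)"
  by (simp add: eps_def power_add[symmetric] power_mult_distrib[symmetric] flip: mult_2)

definition Qm :: "(nat \<Rightarrow> nat) \<Rightarrow> (nat set \<Rightarrow> 'a::field) \<Rightarrow> (nat set \<Rightarrow> 'a)" where
  "Qm \<sigma> x = (\<lambda>S. eps \<sigma> S * x (\<sigma> ` S))"

lemma Psi_Qm: assumes "bij \<sigma>" shows "Psi \<sigma> (Qm \<sigma> x) = x"
proof (rule ext)
  fix U
  have "\<sigma> ` (\<sigma> -` U) = U" using assms by (simp add: bij_is_surj surj_image_vimage_eq)
  thus "Psi \<sigma> (Qm \<sigma> x) U = x U"
    by (simp add: Psi_def Qm_def mult.assoc[symmetric] eps_sq)
qed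

lemma Qm_comp:
  assumes "bij \<sigma>" "\<And>i. deg1 i = deg2 (\<sigma> i)" "x \<in> grass_comp deg2 g"
  shows "Qm \<sigma> x \<in> grass_comp deg1 g"
proof -
  have inj: "inj \<sigma>" using assms bij_is_inj by auto
  have ge: "grass_elem x" and dg: "\<And>S. x S \<noteq> 0 \<Longrightarrow> (\<Sum>i\<in>S. deg2 i) = g"
    using assms(3) by (auto simp: grass_comp_def)
  have sub: "{S. Qm \<sigma> x S \<noteq> 0} \<subseteq> (\<lambda>T. \<sigma> -` T) ` {T. x T \<noteq> 0}"
  proof
    fix S assume "S \<in> {S. Qm \<sigma> x S \<noteq> 0}"
    hence "x (\<sigma> ` S) \<noteq> 0" by (auto simp: Qm_def)
    moreover have "S = \<sigma> -` (\<sigma> ` S)" using inj by (simp add: inj_vimage_image_eq)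
    ultimately show "S \<in> (\<lambda>T. \<sigma> -` T) ` {T. x T \<noteq> 0}" by blast
  qed
  have "finite ((\<lambda>T. \<sigma> -` T) ` {T. x T \<noteq> 0})" using ge unfolding grass_elem_def by simp
  hence "finite {S. Qm \<sigma> x S \<noteq> 0}" using finite_subset[OF sub] by blast
  moreover have "\<forall>S. Qm \<sigma> x S \<noteq> 0 \<longrightarrow> finite S \<and> (\<Sum>i\<in>S. deg1 i) = g"
  proof (intro allI impI)
    fix S assume "Qm \<sigma> x S \<noteq> 0"
    hence nz: "x (\<sigma> ` S) \<noteq> 0" by (auto simp: Qm_def)
    hence "finite (\<sigma> ` S)" using ge unfolding grass_elem_def by blast
    hence "finite S" using inj by (meson finite_imageD inj_on_subset subset_UNIV)
    moreover have "(\<Sum>i\<in>S. deg1 i) = (\<Sum>i\<in>\<sigma> ` S. deg2 i)"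
      using inj assms(2) by (simp add: sum.reindex inj_on_subset)
    ultimately show "finite S \<and> (\<Sum>i\<in>S. deg1 i) = g" using dg[OF nz] by simp
  qed
  ultimately show ?thesis by (auto simp: grass_comp_def grass_elem_def)
qed

lemma transfer:
  assumes "bij \<sigma>" "\<And>i. deg1 i = deg2 (\<sigma> i)" "graded_identity deg1 f"
  shows "graded_identity deg2 f"
  unfolding graded_identity_def
proof (intro allI impI)
  fix \<phi> :: "nat \<times> int \<Rightarrow> nat set \<Rightarrow> 'a"
  assume h: "\<forall>i g. \<phi> (i, g) \<in> grass_comp deg2 g"
  define \<phi>1 where "\<phi>1 = Qm \<sigma> \<circ> \<phi>"
  have q: "Qm \<sigma> x \<in> grass_comp deg1 g" if "x \<in> grass_comp deg2 g" for x g
    by (rule Qm_comp[OF assms(1)]) (use assms(2) that in auto)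
  have "\<forall>i g. \<phi>1 (i, g) \<in> grass_comp deg1 g"
    using h q unfolding \<phi>1_def comp_def by blast
  hence z: "gpoly_eval f \<phi>1 = (\<lambda>_. 0)" using assms(3) unfolding graded_identity_def by blast
  have "\<phi> = Psi \<sigma> \<circ> \<phi>1" by (rule ext) (simp add: \<phi>1_def Psi_Qm[OF assms(1)])
  hence "gpoly_eval f \<phi> = Psi \<sigma> (gpoly_eval f \<phi>1)" by (simp add: Psi_eval[OF assms(1)])
  thus "gpoly_eval f \<phi> = (\<lambda>_. 0)" by (simp add: z Psi_def)
qed

lemma Phi_eval:
  assumes d: "(d::int) \<noteq> 0"
  shows "gpoly_eval (Phi d f) \<phi> = gpoly_eval f (\<phi> \<circ> (\<lambda>(i, h). (i, d * h)))"
proof -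
  define m where "m = (\<lambda>(i::nat, h::int). (i, d * h))"
  define dv where "dv = (\<lambda>(i::nat, g::int). (i, g div d))"
  have dvm: "dv (m p) = p" for p using d by (cases p) (simp add: m_def dv_def)
  have inj: "inj (map m)" by (metis dvm injI list.inj_map)
  have mdv: "m (dv p) = p" if "d dvd snd p" for p using that by (cases p) (auto simp: m_def dv_def)
  have Pm: "Phi d f (map m w) = f w" for w
  proof -
    have 1: "\<forall>x\<in>set (map m w). d dvd snd x" by (auto simp: m_def split: prod.splits)
    have "map dv (map m w) = w" by (simp add: map_map comp_def dvm)
    thus ?thesis using 1 by (simp add: Phi_def dv_def)
  qed
  have supp: "{w. Phi d f w \<noteq> 0} = map m ` {w. f w \<noteq> 0}"
  proof
    show "{w. Phi d f w \<noteq> 0} \<subseteq> map m ` {w. f w \<noteq> 0}"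
    proof
      fix w assume "w \<in> {w. Phi d f w \<noteq> 0}"
      hence a: "\<forall>x\<in>set w. d dvd snd x" and b: "f (map dv w) \<noteq> 0"
        by (auto simp: Phi_def dv_def split: if_splits)
      have "map m (map dv w) = w" using a by (induction w) (auto simp: mdv)
      thus "w \<in> map m ` {w. f w \<noteq> 0}" using b by (metis (mono_tags) image_eqI mem_Collect_eq)
    qed
  next
    show "map m ` {w. f w \<noteq> 0} \<subseteq> {w. Phi d f w \<noteq> 0}" using Pm by auto
  qed
  show ?thesis
  proof (rule ext)
    fix U
    have "gpoly_eval (Phi d f) \<phi> U = (\<Sum>w\<in>map m ` {w. f w \<noteq> 0}. Phi d f w * grass_prod (map \<phi> w) U)"
      by (simp add: gpoly_eval_def supp)
    also have "\<dots> = (\<Sum>w\<in>{w. f w \<noteq> 0}. f w * grass_prod (map (\<phi> \<circ> m) w) U)"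
      by (subst sum.reindex) (use inj in \<open>auto intro: inj_on_subset simp: Pm map_map\<close>)
    finally show "gpoly_eval (Phi d f) \<phi> U = gpoly_eval f (\<phi> \<circ> (\<lambda>(i, h). (i, d * h))) U"
      by (simp add: gpoly_eval_def m_def)
  qed
qed

lemma comp_scale:
  assumes "(d::int) \<noteq> 0"
  shows "grass_comp (\<lambda>i. d * \<alpha> i) (d * h) = grass_comp \<alpha> h"
  using assms by (simp add: grass_comp_def sum_distrib_left[symmetric])

lemma zero_comp: "(\<lambda>_. 0) \<in> grass_comp deg g"
  by (simp add: grass_comp_def grass_elem_def)

lemma scaling:
  assumes d: "(d::int) \<noteq> 0"
  shows "graded_identity \<alpha> f \<longleftrightarrow> graded_identity (\<lambda>i. d * \<alpha> i) (Phi d f)"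
proof
  assume H: "graded_identity \<alpha> f"
  show "graded_identity (\<lambda>i. d * \<alpha> i) (Phi d f)"
    unfolding graded_identity_def
  proof (intro allI impI)
    fix \<phi> :: "nat \<times> int \<Rightarrow> nat set \<Rightarrow> 'a"
    assume h: "\<forall>i g. \<phi> (i, g) \<in> grass_comp (\<lambda>i. d * \<alpha> i) g"
    have "\<forall>i g. (\<phi> \<circ> (\<lambda>(i, h). (i, d * h))) (i, g) \<in> grass_comp \<alpha> g"
      using h by (simp, metis comp_scale[OF d])
    thus "gpoly_eval (Phi d f) \<phi> = (\<lambda>_. 0)"
      using H unfolding graded_identity_def Phi_eval[OF d] by blast
  qed
next
  assume H: "graded_identity (\<lambda>i. d * \<alpha> i) (Phi d f)"
  show "graded_identity \<alpha> f"
    unfolding graded_identity_def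
  proof (intro allI impI)
    fix \<psi> :: "nat \<times> int \<Rightarrow> nat set \<Rightarrow> 'a"
    assume h: "\<forall>i g. \<psi> (i, g) \<in> grass_comp \<alpha> g"
    define \<phi> where "\<phi> = (\<lambda>(i, g). if d dvd g then \<psi> (i, g div d) else (\<lambda>_. 0))"
    have "\<phi> (i, g) \<in> grass_comp (\<lambda>i. d * \<alpha> i) g" for i g
    proof (cases "d dvd g")
      case True
      then obtain k where "g = d * k" by blast
      thus ?thesis using h d by (simp add: \<phi>_def comp_scale[OF d])
    next
      case False thus ?thesis by (simp add: \<phi>_def zero_comp)
    qed
    hence "gpoly_eval (Phi d f) \<phi> = (\<lambda>_. 0)" using H unfolding graded_identity_def by blast
    moreover have "\<phi> \<circ> (\<lambda>(i, h). (i, d * h)) = \<psi>" using d by (auto simp: \<phi>_def)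
    ultimately show "gpoly_eval f \<psi> = (\<lambda>_. 0)" by (simp add: Phi_eval[OF d])
  qed
qed

lemma ecard_bij:
  fixes A B :: "nat set"
  assumes "ecard A = ecard B"
  shows "\<exists>h. bij_betw h A B"
proof (cases "finite A")
  case True
  hence "finite B" "card A = card B" using assms by (auto simp: ecard_def split: if_splits)
  thus ?thesis using True finite_same_card_bij by blast
next
  case False
  hence "infinite B" using assms by (auto simp: ecard_def split: if_splits)
  have "bij_betw (the_inv_into UNIV (enumerate A)) A UNIV"
    using bij_betw_the_inv_into bij_enumerate False by blast
  thus ?thesis using bij_betw_trans bij_enumerate[OF \<open>infinite B\<close>] by blast
qed

theorem lemma5p4:
  fixes n :: nat and r :: "nat \<Rightarrow> int" and v :: "nat \<Rightarrow> enat"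
    and f :: "'a::field_char_0 gpoly"
    and \<alpha> \<beta> :: "nat \<Rightarrow> int"
  defines "d \<equiv> Gcd (r ` {..<n})"
  assumes distinct: "inj_on r {..<n}"
    and d_nz: "d \<noteq> 0"
    and f_poly: "is_gpoly f"
    and f_ml: "multilinear f"
    and \<alpha>: "is_split_grading n (\<lambda>j. r j div d) v \<alpha>"
    and \<beta>: "is_split_grading n r v \<beta>"
  shows "graded_identity \<alpha> f \<longleftrightarrow> graded_identity \<beta> (Phi d f)"
proof -
  have dvd: "d dvd r j" if "j < n" for j unfolding d_def using that by (simp add: Gcd_dvd)
  have rj: "r j = d * (r j div d)" if "j < n" for j using dvd[OF that] by simp
  have uniq: "j = k" if "j < n" "k < n" "r j div d = r k div d" for j k
    using rj[OF that(1)] rj[OF that(2)] that distinct by (metis inj_on_def lessThan_iff)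
  define A where "A = (\<lambda>j. {i. \<alpha> i = r j div d})"
  define B where "B = (\<lambda>j. {i. \<beta> i = r j})"
  have "\<forall>j. \<exists>h. j < n \<longrightarrow> bij_betw h (A j) (B j)"
  proof
    fix j show "\<exists>h. j < n \<longrightarrow> bij_betw h (A j) (B j)"
    proof (cases "j < n")
      case True
      hence "ecard (A j) = ecard (B j)" using \<alpha> \<beta>
        unfolding is_split_grading_def A_def B_def by simp
      thus ?thesis using ecard_bij by blast
    qed simp
  qed
  then obtain H where H: "\<And>j. j < n \<Longrightarrow> bij_betw (H j) (A j) (B j)" by metis
  define c where "c = (\<lambda>i. SOME j. j < n \<and> \<alpha> i = r j div d)"
  have c: "c i < n \<and> \<alpha> i = r (c i) div d" for i
  proof -
    have "\<exists>j<n. \<alpha> i = r j div d" using \<alpha> unfolding is_split_grading_def by blast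
    thus ?thesis unfolding c_def by (metis (mono_tags, lifting) someI_ex)
  qed
  define \<sigma> where "\<sigma> = (\<lambda>i. H (c i) i)"
  have inA: "i \<in> A (c i)" for i using c by (simp add: A_def)
  have \<sigma>B: "\<sigma> i \<in> B (c i)" for i
    using H[of "c i"] inA[of i] c[of i] unfolding \<sigma>_def bij_betw_def by blast
  have \<beta>\<sigma>: "\<beta> (\<sigma> i) = d * \<alpha> i" for i
    using \<sigma>B[of i] c[of i] rj[of "c i"] by (simp add: B_def)
  have "bij \<sigma>"
    unfolding bij_def
  proof
    show "inj \<sigma>"
    proof (rule injI)
      fix x y assume e: "\<sigma> x = \<sigma> y"
      have "r (c x) = r (c y)" using \<sigma>B[of x] \<sigma>B[of y] e by (simp add: B_def)
      hence cc: "c x = c y" using distinct c by (meson inj_onD lessThan_iff)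
      have "H (c x) x = H (c x) y" using e cc by (simp add: \<sigma>_def)
      thus "x = y" using H[of "c x"] c[of x] inA[of x] inA[of y] cc
        unfolding bij_betw_def inj_on_def by metis
    qed
  next
    show "surj \<sigma>"
    proof (rule surjI[where f = "\<lambda>k. the_inv_into (A (SOME j. j < n \<and> \<beta> k = r j)) (H (SOME j. j < n \<and> \<beta> k = r j)) k"])
      fix k
      define j where "j = (SOME j. j < n \<and> \<beta> k = r j)"
      have "\<exists>j<n. \<beta> k = r j" using \<beta> unfolding is_split_grading_def by blast
      hence j: "j < n \<and> \<beta> k = r j" unfolding j_def by (metis (mono_tags, lifting) someI_ex)
      hence kB: "k \<in> B j" by (simp add: B_def)
      define i where "i = the_inv_into (A j) (H j) k"
      have iA: "i \<in> A j" and Hi: "H j i = k"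
        using H[of j] j kB unfolding i_def
        by (auto intro: the_inv_into_into f_the_inv_into_f_bij_betw simp: bij_betw_def)
      have "c i = j" using c[of i] iA j uniq by (simp add: A_def)
      hence "\<sigma> i = k" using Hi by (simp add: \<sigma>_def)
      thus "\<sigma> (the_inv_into (A (SOME j. j < n \<and> \<beta> k = r j)) (H (SOME j. j < n \<and> \<beta> k = r j)) k) = k"
        by (simp add: i_def j_def)
    qed
  qed
  have "graded_identity \<alpha> f \<longleftrightarrow> graded_identity (\<lambda>i. d * \<alpha> i) (Phi d f)"
    using scaling[OF d_nz] by blast
  also have "\<dots> \<longleftrightarrow> graded_identity \<beta> (Phi d f)"
  proof
    assume "graded_identity (\<lambda>i. d * \<alpha> i) (Phi d f)"
    thus "graded_identity \<beta> (Phi d f)"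
      using transfer[OF \<open>bij \<sigma>\<close>, of "\<lambda>i. d * \<alpha> i" \<beta>] \<beta>\<sigma> by simp
  next
    assume "graded_identity \<beta> (Phi d f)"
    moreover have "bij (inv \<sigma>)" using \<open>bij \<sigma>\<close> by (simp add: bij_imp_bij_inv)
    moreover have "\<beta> i = d * \<alpha> (inv \<sigma> i)" for i
      using \<beta>\<sigma>[of "inv \<sigma> i"] \<open>bij \<sigma>\<close> by (simp add: bij_is_surj surj_f_inv_f)
    ultimately show "graded_identity (\<lambda>i. d * \<alpha> i) (Phi d f)"
      using transfer[of "inv \<sigma>" \<beta> "\<lambda>i. d * \<alpha> i"] by blast
  qed
  finally show ?thesis .
qed

end
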